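(* Let $\ell>0$ and $\gamma\in\Sigma^\ell$ with length $\mathscr{L}(\gamma)=L$. Then its arclength parametrization $\Gamma:\mathbb{R}/L\mathbb{Z}\to\mathbb{R}^3$ (starting at $\Gamma(0)=\gamma(0)$, with the same orientation) is also $D_2$-symmetric, i.e. $\Gamma\in\Sigma^L$.
   Context: $R_0=\mathrm{Id}$, $R_1=\mathrm{diag}(1,-1,-1)$, $R_2=\mathrm{diag}(-1,1,-1)$, $R_3=\mathrm{diag}(-1,-1,1)$. For $\ell>0$, on $\mathbb{R}/\ell\mathbb{Z}$: $\psi_0^\ell(t)=t$, $\psi_1^\ell(t)=-t+\ell/2$, $\psi_2^\ell(t)=t-\ell/2$, $\psi_3^\ell(t)=-t+\ell$ (mod $\ell$); $\tau^\ell_{d_i}(\gamma)(t)=R_i\gamma(\psi_i^\ell(t))$. $\Sigma^\ell=\{\gamma\in C^0(\mathbb{R}/\ell\mathbb{Z},\mathbb{R}^3):0<\mathscr{L}(\gamma)<\infty,\ \tau^\ell_{d_i}(\gamma)=\gamma,\ i=0,1,2,3\}$, $\mathscr{L}$ denoting length. *)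

theory Defs
  imports "HOL-Analysis.Analysis"
begin

text \<open>Curves on R/lZ are represented as l-periodic functions on the real line.\<close>

definition periodic_on_R :: "real \<Rightarrow> (real \<Rightarrow> 'a) \<Rightarrow> bool" where
  "periodic_on_R l g \<longleftrightarrow> (\<forall>t. g (t + l) = g t)"

definition curve_variation :: "(real \<Rightarrow> real^3) \<Rightarrow> real \<Rightarrow> real \<Rightarrow> ereal" where
  "curve_variation g a b =
     (SUP xs \<in> {xs. xs \<noteq> [] \<and> sorted xs \<and> hd xs = a \<and> last xs = b}.
        ereal (\<Sum>i < length xs - 1. dist (g (xs ! i)) (g (xs ! Suc i))))"

definition curve_length :: "real \<Rightarrow> (real \<Rightarrow> real^3) \<Rightarrow> ereal" where
  "curve_length l g = curve_variation g 0 l"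

definition diag3 :: "real \<Rightarrow> real \<Rightarrow> real \<Rightarrow> real^3^3" where
  "diag3 a b c = (\<chi> i j. if i = j then (if i = 1 then a else if i = 2 then b else c) else 0)"

definition Rmat :: "nat \<Rightarrow> real^3^3" where
  "Rmat i = (if i = 0 then mat 1
             else if i = 1 then diag3 1 (-1) (-1)
             else if i = 2 then diag3 (-1) 1 (-1)
             else diag3 (-1) (-1) 1)"

definition psi :: "real \<Rightarrow> nat \<Rightarrow> real \<Rightarrow> real" where
  "psi l i t = (if i = 0 then t
               else if i = 1 then - t + l / 2
               else if i = 2 then t - l / 2
               else - t + l)"

definition tau :: "real \<Rightarrow> nat \<Rightarrow> (real \<Rightarrow> real^3) \<Rightarrow> (real \<Rightarrow> real^3)" where
  "tau l i g = (\<lambda>t. Rmat i *v g (psi l i t))"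

definition Sigma_sym :: "real \<Rightarrow> (real \<Rightarrow> real^3) set" where
  "Sigma_sym l = {g. continuous_on UNIV g \<and> periodic_on_R l g \<and>
                     0 < curve_length l g \<and> curve_length l g < \<infinity> \<and>
                     (\<forall>i \<in> {0,1,2,3}. tau l i g = g)}"

text \<open>Arclength parametrization of g (period l) with the same starting point and orientation:
  an L-periodic curve G with G(s(t)) = g(t) for t in [0,l], s(t) the length of g on [0,t].\<close>
definition is_arclength_param :: "real \<Rightarrow> (real \<Rightarrow> real^3) \<Rightarrow> (real \<Rightarrow> real^3) \<Rightarrow> bool" where
  "is_arclength_param l g G \<longleftrightarrow>
     periodic_on_R (real_of_ereal (curve_length l g)) G \<and>
     (\<forall>t \<in> {0..l}. G (real_of_ereal (curve_variation g 0 t)) = g t)"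

end

theory Submission
  imports Defs
begin


fun plen :: "(real \<Rightarrow> real^3) \<Rightarrow> real list \<Rightarrow> real" where
  "plen g (x # y # xs) = dist (g x) (g y) + plen g (y # xs)"
| "plen g _ = 0"

definition parts :: "real \<Rightarrow> real \<Rightarrow> real list set" where
  "parts a b = {xs. xs \<noteq> [] \<and> sorted xs \<and> hd xs = a \<and> last xs = b}"

lemma plen_sum: "(\<Sum>i < length xs - 1. dist (g (xs ! i)) (g (xs ! Suc i))) = plen g xs"
proof (induction g xs rule: plen.induct)
  case (1 g x y xs)
  have "(\<Sum>i < length (x#y#xs) - 1. dist (g ((x#y#xs) ! i)) (g ((x#y#xs) ! Suc i)))
     = (\<Sum>i < Suc (length (y#xs) - 1). dist (g ((x#y#xs) ! i)) (g ((x#y#xs) ! Suc i)))" by simp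
  also have "\<dots> = dist (g x) (g y) + (\<Sum>i < length (y#xs) - 1. dist (g ((y#xs) ! i)) (g ((y#xs) ! Suc i)))"
    by (subst sum.lessThan_Suc_shift) simp
  finally show ?case using 1 by simp
qed auto

lemma cv_alt: "curve_variation g a b = (SUP xs\<in>parts a b. ereal (plen g xs))"
  unfolding curve_variation_def parts_def plen_sum ..

lemma plen_nonneg: "plen g xs \<ge> 0"
  by (induction g xs rule: plen.induct) auto

lemma plen_append: "plen g (xs @ y # ys) = plen g (xs @ [y]) + plen g (y # ys)"
proof (induction xs)
  case (Cons x xs)
  then show ?case by (cases xs) auto
qed simp

lemma sorted_bounds: "sorted xs \<Longrightarrow> xs \<noteq> [] \<Longrightarrow> u \<in> set xs \<Longrightarrow> hd xs \<le> u \<and> u \<le> last xs"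
proof (induction xs)
  case (Cons x xs)
  then show ?case by (cases xs) auto
qed simp

lemma parts_bounds: "xs \<in> parts a b \<Longrightarrow> u \<in> set xs \<Longrightarrow> a \<le> u \<and> u \<le> b"
  unfolding parts_def using sorted_bounds by blast

lemma parts_concat:
  assumes "ys \<in> parts a b" "zs \<in> parts b c"
  shows "ys @ tl zs \<in> parts a c \<and> plen g (ys @ tl zs) = plen g ys + plen g zs"
proof -
  have ys: "ys \<noteq> []" "sorted ys" "hd ys = a" "last ys = b" using assms(1) by (auto simp: parts_def)
  have zs: "zs \<noteq> []" "sorted zs" "hd zs = b" "last zs = c" using assms(2) by (auto simp: parts_def)
  have ye: "ys = butlast ys @ [b]" by (metis append_butlast_last_id ys(1) ys(4))
  have ze: "zs = b # tl zs" using zs by (cases zs) auto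
  have "plen g (ys @ tl zs) = plen g (butlast ys @ b # tl zs)"
    by (subst ye) simp
  also have "\<dots> = plen g ys + plen g zs"
    by (subst plen_append) (metis ye ze)
  finally have 1: "plen g (ys @ tl zs) = plen g ys + plen g zs" .
  have "\<forall>u\<in>set ys. u \<le> b" using parts_bounds[OF assms(1)] by blast
  moreover have "\<forall>u\<in>set (tl zs). b \<le> u" using parts_bounds[OF assms(2)] zs
    by (metis list.set_sel(2) tl_Nil empty_iff list.set(1))
  moreover have "sorted (tl zs)" using zs by (simp add: sorted_tl)
  ultimately have "sorted (ys @ tl zs)" using ys by (force simp: sorted_append)
  moreover have "last (ys @ tl zs) = c" using ys zs ze
    by (metis append_Nil2 last_ConsL last_ConsR last_appendR)
  ultimately have "ys @ tl zs \<in> parts a c" using ys by (simp add: parts_def)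
  with 1 show ?thesis by simp
qed

lemma parts_split:
  "sorted (x#xs) \<Longrightarrow> x \<le> b \<Longrightarrow> b \<le> last (x#xs) \<Longrightarrow>
   \<exists>ys zs. ys \<in> parts x b \<and> zs \<in> parts b (last (x#xs)) \<and> plen g (x#xs) \<le> plen g ys + plen g zs
     \<and> set ys \<subseteq> insert b (set (x#xs)) \<and> set zs \<subseteq> insert b (set (x#xs))"
proof (induction xs arbitrary: x)
  case Nil
  then have "x = b" by simp
  then show ?case by (intro exI[of _ "[b]"]) (auto simp: parts_def)
next
  case (Cons y xs)
  show ?case
  proof (cases "y \<le> b")
    case True
    have "sorted (y#xs)" using Cons.prems by simp
    from Cons.IH[OF this True] Cons.prems obtain ys zs where
      h: "ys \<in> parts y b" "zs \<in> parts b (last (y#xs))" "plen g (y#xs) \<le> plen g ys + plen g zs"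
         "set ys \<subseteq> insert b (set (y#xs))" "set zs \<subseteq> insert b (set (y#xs))" by auto
    have "\<forall>u\<in>set ys. x \<le> u" using parts_bounds[OF h(1)] Cons.prems by force
    then have "x # ys \<in> parts x b" using h(1)
      by (auto simp: parts_def)
    moreover have "plen g (x#ys) = dist (g x) (g y) + plen g ys" using h(1)
      by (cases ys) (auto simp: parts_def)
    ultimately show ?thesis using h
      by (intro exI[of _ "x#ys"] exI[of _ zs]) auto
  next
    case False
    have "[x,b] \<in> parts x b" using Cons.prems by (auto simp: parts_def)
    moreover have "b # y # xs \<in> parts b (last (x#y#xs))" using Cons.prems False
      by (auto simp: parts_def)
    moreover have "dist (g x) (g y) \<le> dist (g x) (g b) + dist (g b) (g y)" by (rule dist_triangle)
    ultimately show ?thesis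
      by (intro exI[of _ "[x,b]"] exI[of _ "b#y#xs"]) auto
  qed
qed

lemma plen_const: "set zs \<subseteq> {v} \<Longrightarrow> plen g zs = 0"
  by (induction g zs rule: plen.induct) auto

lemma plen_two: "sorted zs \<Longrightarrow> set zs \<subseteq> {x, y} \<Longrightarrow> plen g zs \<le> dist (g x) (g y)"
proof (induction g zs rule: plen.induct)
  case (1 g u v xs)
  show ?case
  proof (cases "u = v")
    case True
    then show ?thesis using 1 by auto
  next
    case False
    have uv: "u < v" using 1(2) False by auto
    have xy: "{x,y} = {u,v}" using 1(3) False by auto
    have "set (v#xs) \<subseteq> {v}"
    proof
      fix w assume w: "w \<in> set (v#xs)"
      then have "w \<in> {u,v}" using 1(3) xy by auto
      moreover have "v \<le> w" using w 1(2) by auto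
      ultimately show "w \<in> {v}" using uv by auto
    qed
    then have "plen g (v#xs) = 0" by (rule plen_const)
    moreover have "dist (g u) (g v) = dist (g x) (g y)" using 1(3) False
      by (auto simp: dist_commute)
    ultimately show ?thesis by simp
  qed
qed auto



lemma V_upper: "xs \<in> parts a b \<Longrightarrow> ereal (plen g xs) \<le> curve_variation g a b"
  unfolding cv_alt by (rule SUP_upper)

lemma V_dist: "a \<le> b \<Longrightarrow> ereal (dist (g a) (g b)) \<le> curve_variation g a b"
  using V_upper[of "[a,b]" a b g] by (simp add: parts_def)

lemma V_nonneg: "a \<le> b \<Longrightarrow> 0 \<le> curve_variation g a b"
  using V_dist[of a b g] by (meson order_trans zero_le_dist ereal_less_eq(5))

lemma parts_ne: "a \<le> b \<Longrightarrow> parts a b \<noteq> {}"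
  by (auto simp: parts_def intro!: exI[of _ "[a,b]"])

lemma V_add:
  assumes "a \<le> b" "b \<le> c"
  shows "curve_variation g a c = curve_variation g a b + curve_variation g b c"
proof (rule antisym)
  show "curve_variation g a c \<le> curve_variation g a b + curve_variation g b c"
    unfolding cv_alt[of g a c]
  proof (rule SUP_least)
    fix xs assume xs: "xs \<in> parts a c"
    then obtain x xs' where e: "xs = x # xs'" by (cases xs) (auto simp: parts_def)
    have "sorted (x#xs')" "x \<le> b" "b \<le> last (x#xs')" using xs e assms by (auto simp: parts_def)
    from parts_split[OF this, of g] obtain ys zs where
      h: "ys \<in> parts x b" "zs \<in> parts b (last (x#xs'))" "plen g (x#xs') \<le> plen g ys + plen g zs"
      by blast
    have "x = a" "last (x#xs') = c" using xs e by (auto simp: parts_def)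
    then have "ereal (plen g ys) \<le> curve_variation g a b" "ereal (plen g zs) \<le> curve_variation g b c"
      using h V_upper by auto
    then have "ereal (plen g ys) + ereal (plen g zs) \<le> curve_variation g a b + curve_variation g b c"
      by (rule add_mono)
    then show "ereal (plen g xs) \<le> curve_variation g a b + curve_variation g b c"
      using h(3) e by (metis ereal_less_eq(3) order_trans plus_ereal.simps(1))
  qed
next
  have nb: "curve_variation g b c \<noteq> -\<infinity>" using V_nonneg[OF assms(2), of g] by auto
  have "curve_variation g a b + curve_variation g b c
      = (SUP ys\<in>parts a b. ereal (plen g ys) + curve_variation g b c)"
    unfolding cv_alt[of g a b] using SUP_ereal_add_left[OF parts_ne[OF assms(1)] nb] by simp
  also have "\<dots> \<le> curve_variation g a c"
  proof (rule SUP_least)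
    fix ys assume ys: "ys \<in> parts a b"
    have e: "(SUP zs\<in>parts b c. ereal (plen g zs) + ereal (plen g ys)) = (SUP zs\<in>parts b c. ereal (plen g zs)) + ereal (plen g ys)"
      by (rule SUP_ereal_add_left[OF parts_ne[OF assms(2)]]) simp
    have "ereal (plen g ys) + curve_variation g b c
        = (SUP zs\<in>parts b c. ereal (plen g zs) + ereal (plen g ys))"
      unfolding cv_alt[of g b c] e by (rule add.commute)
    also have "\<dots> \<le> curve_variation g a c"
    proof (rule SUP_least)
      fix zs assume zs: "zs \<in> parts b c"
      from parts_concat[OF ys zs, of g] have "ys @ tl zs \<in> parts a c" "plen g (ys @ tl zs) = plen g ys + plen g zs"
        by auto
      then show "ereal (plen g zs) + ereal (plen g ys) \<le> curve_variation g a c"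
        using V_upper[of "ys @ tl zs" a c g] by (simp add: add.commute)
    qed
    finally show "ereal (plen g ys) + curve_variation g b c \<le> curve_variation g a c" .
  qed
  finally show "curve_variation g a b + curve_variation g b c \<le> curve_variation g a c" .
qed



lemma plen_map_trans:
  assumes "\<forall>u v. dist (g (u + c)) (g (v + c)) = dist (g u) (g v)"
  shows "plen g (map (\<lambda>u. u + c) xs) = plen g xs"
  using assms by (induction g xs rule: plen.induct) auto

lemma parts_map_trans: "xs \<in> parts a b \<Longrightarrow> map (\<lambda>u. u + c) xs \<in> parts (a + c) (b + c)"
  by (simp add: parts_def sorted_map hd_map last_map)

lemma V_trans:
  assumes "\<forall>u v. dist (g (u + c)) (g (v + c)) = dist (g u) (g v)"
  shows "curve_variation g (a + c) (b + c) = curve_variation g a b"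
proof -
  have "parts (a + c) (b + c) = (map (\<lambda>u. u + c)) ` parts a b"
  proof (rule set_eqI, rule iffI)
    fix ys assume ys: "ys \<in> parts (a + c) (b + c)"
    have "ys = map (\<lambda>u. u + c) (map (\<lambda>u. u + (- c)) ys)" by (simp add: comp_def)
    moreover have "map (\<lambda>u. u + (- c)) ys \<in> parts a b" using parts_map_trans[OF ys, of "-c"] by simp
    ultimately show "ys \<in> (map (\<lambda>u. u + c)) ` parts a b" by blast
  next
    fix ys assume "ys \<in> (map (\<lambda>u. u + c)) ` parts a b"
    then show "ys \<in> parts (a + c) (b + c)" using parts_map_trans by blast
  qed
  then show ?thesis unfolding cv_alt
    by (simp add: image_comp comp_def plen_map_trans[OF assms])
qed

lemma plen_rev: "plen g (rev xs) = plen g xs"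
proof (induction g xs rule: plen.induct)
  case (1 g x y xs)
  have "plen g (rev (x#y#xs)) = plen g (rev xs @ y # [x])" by simp
  also have "\<dots> = plen g (rev (y#xs)) + dist (g y) (g x)" by (subst plen_append) simp
  finally show ?case using 1 by (simp add: dist_commute)
qed auto

lemma plen_map_refl:
  assumes "\<forall>u v. dist (g (c - u)) (g (c - v)) = dist (g u) (g v)"
  shows "plen g (map (\<lambda>u. c - u) xs) = plen g xs"
  using assms by (induction g xs rule: plen.induct) auto

lemma sorted_refl: "sorted (xs::real list) \<Longrightarrow> sorted (rev (map (\<lambda>u. c - u) xs))"
  unfolding sorted_wrt_rev sorted_wrt_map
  by (erule sorted_wrt_mono_rel[rotated]) simp

lemma parts_refl: "xs \<in> parts a b \<Longrightarrow> rev (map (\<lambda>u. c - u) xs) \<in> parts (c - b) (c - a)"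
  unfolding parts_def using sorted_refl[of xs c] by (simp add: hd_rev last_rev hd_map last_map)

lemma V_refl:
  assumes "\<forall>u v. dist (g (c - u)) (g (c - v)) = dist (g u) (g v)"
  shows "curve_variation g (c - b) (c - a) = curve_variation g a b"
proof -
  let ?f = "\<lambda>xs. rev (map (\<lambda>u. c - u) xs)"
  have ff: "?f (?f xs) = xs" for xs by (simp add: rev_map comp_def)
  have "parts (c - b) (c - a) = ?f ` parts a b"
  proof (rule set_eqI, rule iffI)
    fix ys assume "ys \<in> parts (c - b) (c - a)"
    then have "?f ys \<in> parts (c - (c - a)) (c - (c - b))" by (rule parts_refl)
    then have "?f ys \<in> parts a b" by simp
    then show "ys \<in> ?f ` parts a b" using ff[of ys] by (metis image_eqI)
  qed (auto intro: parts_refl)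
  then show ?thesis unfolding cv_alt
    by (simp add: image_comp comp_def plen_map_refl[OF assms] plen_rev)
qed



lemma V_right:
  assumes cont: "isCont g x" and xb: "x < b" and fin: "curve_variation g x b < \<infinity>" and e: "0 < e"
  shows "\<exists>y. x < y \<and> y \<le> b \<and> curve_variation g x y < ereal e"
proof -
  obtain v where v: "curve_variation g x b = ereal v"
    using fin V_nonneg[of x b g] xb by (cases "curve_variation g x b") auto
  have "ereal (v - e/2) < (SUP xs\<in>parts x b. ereal (plen g xs))"
    using e by (simp add: cv_alt[symmetric] v)
  then obtain P where P: "P \<in> parts x b" "v - e/2 < plen g P"
    by (auto simp: less_SUP_iff)
  from cont e obtain d where d: "d > 0" "\<forall>y. dist y x < d \<longrightarrow> dist (g y) (g x) < e/2"
    unfolding continuous_at_eps_delta by (meson half_gt_zero)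
  define M where "M = {u \<in> set P. x < u}"
  have bM: "b \<in> M" using P(1) xb by (auto simp: M_def parts_def)
  have fM: "finite M" by (simp add: M_def)
  define m where "m = Min M"
  have "m \<in> M" unfolding m_def using fM bM by (intro Min_in) auto
  moreover have "m \<le> b" unfolding m_def using fM bM by simp
  ultimately have mM: "x < m" "m \<le> b" by (auto simp: M_def)
  define y where "y = min (x + d/2) m"
  have xy: "x < y" "y \<le> b" using mM d by (auto simp: y_def)
  obtain P' where Pe: "P = x # P'" using P(1) by (cases P) (auto simp: parts_def)
  have "sorted (x#P')" "x \<le> y" "y \<le> last (x#P')" using P(1) Pe xy by (auto simp: parts_def)
  from parts_split[OF this, of g] Pe P(1) obtain ys zs where
    h: "ys \<in> parts x y" "zs \<in> parts y b" "plen g P \<le> plen g ys + plen g zs" "set ys \<subseteq> insert y (set P)"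
    by (auto simp: parts_def)
  have "set ys \<subseteq> {x, y}"
  proof
    fix u assume u: "u \<in> set ys"
    have b: "x \<le> u" "u \<le> y" using parts_bounds[OF h(1) u] by auto
    show "u \<in> {x, y}"
    proof (cases "u = y \<or> u = x")
      case False
      then have "u \<in> M" using u h(4) b by (auto simp: M_def)
      then have "m \<le> u" using fM by (simp add: m_def)
      then show ?thesis using b by (auto simp: y_def)
    qed auto
  qed
  then have "plen g ys \<le> dist (g x) (g y)" using plen_two h(1) by (auto simp: parts_def)
  also have "\<dots> < e/2"
  proof -
    have "dist y x < d" using xy d by (auto simp: y_def dist_real_def)
    then show ?thesis using d(2) by (metis dist_commute)
  qed
  finally have ys: "plen g ys < e/2" .
  have zs: "ereal (plen g zs) \<le> curve_variation g y b" using h(2) by (rule V_upper)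
  have add: "curve_variation g x b = curve_variation g x y + curve_variation g y b"
    using xy by (intro V_add) auto
  obtain A where A: "curve_variation g x y = ereal A"
    using add v V_nonneg[of x y g] V_nonneg[of y b g] xy
    by (cases "curve_variation g x y"; cases "curve_variation g y b") auto
  obtain B where B: "curve_variation g y b = ereal B"
    using add v V_nonneg[of x y g] V_nonneg[of y b g] xy
    by (cases "curve_variation g x y"; cases "curve_variation g y b") auto
  have "A + B = v" using add A B v by simp
  moreover have "plen g zs \<le> B" using zs B by simp
  ultimately have "A < e" using ys h(3) P(2) by linarith
  then show ?thesis using xy A by auto
qed

lemma V_left:
  assumes cont: "isCont g x" and ax: "a < x" and fin: "curve_variation g a x < \<infinity>" and e: "0 < e"
  shows "\<exists>y. a \<le> y \<and> y < x \<and> curve_variation g y x < ereal e"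
proof -
  obtain v where v: "curve_variation g a x = ereal v"
    using fin V_nonneg[of a x g] ax by (cases "curve_variation g a x") auto
  have "ereal (v - e/2) < (SUP xs\<in>parts a x. ereal (plen g xs))"
    using e by (simp add: cv_alt[symmetric] v)
  then obtain P where P: "P \<in> parts a x" "v - e/2 < plen g P"
    by (auto simp: less_SUP_iff)
  from cont e obtain d where d: "d > 0" "\<forall>y. dist y x < d \<longrightarrow> dist (g y) (g x) < e/2"
    unfolding continuous_at_eps_delta by (meson half_gt_zero)
  define M where "M = {u \<in> set P. u < x}"
  have bM: "a \<in> M" using P(1) ax by (auto simp: M_def parts_def)
  have fM: "finite M" by (simp add: M_def)
  define m where "m = Max M"
  have "m \<in> M" unfolding m_def using fM bM by (intro Max_in) auto
  moreover have "a \<le> m" unfolding m_def using fM bM by simp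
  ultimately have mM: "m < x" "a \<le> m" by (auto simp: M_def)
  define y where "y = max (x - d/2) m"
  have xy: "y < x" "a \<le> y" using mM d by (auto simp: y_def)
  obtain P' where Pe: "P = a # P'" using P(1) by (cases P) (auto simp: parts_def)
  have "sorted (a#P')" "a \<le> y" "y \<le> last (a#P')" using P(1) Pe xy by (auto simp: parts_def)
  from parts_split[OF this, of g] Pe P(1) obtain ys zs where
    h: "ys \<in> parts a y" "zs \<in> parts y x" "plen g P \<le> plen g ys + plen g zs" "set zs \<subseteq> insert y (set P)"
    by (auto simp: parts_def)
  have "set zs \<subseteq> {y, x}"
  proof
    fix u assume u: "u \<in> set zs"
    have b: "y \<le> u" "u \<le> x" using parts_bounds[OF h(2) u] by auto
    show "u \<in> {y, x}"
    proof (cases "u = y \<or> u = x")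
      case False
      then have "u \<in> M" using u h(4) b by (auto simp: M_def)
      then have "u \<le> m" using fM by (simp add: m_def)
      then show ?thesis using b by (auto simp: y_def)
    qed auto
  qed
  then have "plen g zs \<le> dist (g y) (g x)" using plen_two h(2) by (auto simp: parts_def)
  also have "\<dots> < e/2"
  proof -
    have "dist y x < d" using xy d by (auto simp: y_def dist_real_def)
    then show ?thesis using d(2) by (metis dist_commute)
  qed
  finally have zs: "plen g zs < e/2" .
  have ys: "ereal (plen g ys) \<le> curve_variation g a y" using h(1) by (rule V_upper)
  have add: "curve_variation g a x = curve_variation g a y + curve_variation g y x"
    using xy by (intro V_add) auto
  obtain A where A: "curve_variation g a y = ereal A"
    using add v V_nonneg[of a y g] V_nonneg[of y x g] xy
    by (cases "curve_variation g a y"; cases "curve_variation g y x") auto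
  obtain B where B: "curve_variation g y x = ereal B"
    using add v V_nonneg[of a y g] V_nonneg[of y x g] xy
    by (cases "curve_variation g a y"; cases "curve_variation g y x") auto
  have "A + B = v" using add A B v by simp
  moreover have "plen g ys \<le> A" using ys A by simp
  ultimately have "B < e" using zs h(3) P(2) by linarith
  then show ?thesis using xy B by auto
qed



lemma diag3_mult: "(diag3 a b c *v z) $ k = (if k = 1 then a else if k = 2 then b else c) * z $ k"
proof -
  have "k = 1 \<or> k = 2 \<or> k = 3" by (rule exhaust_3)
  then show ?thesis unfolding diag3_def matrix_vector_mult_def sum_3 by auto
qed

lemma diag_dist:
  assumes "\<bar>a\<bar> = 1" "\<bar>b\<bar> = 1" "\<bar>c\<bar> = 1"
  shows "dist (diag3 a b c *v x) (diag3 a b c *v y) = dist x y"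
  unfolding dist_vec_def diag3_mult
proof (rule L2_set_cong)
  fix k :: 3
  let ?d = "(if k = 1 then a else if k = 2 then b else c)"
  have "\<bar>?d\<bar> = 1" using assms by auto
  have "?d * x $ k - ?d * y $ k = ?d * (x $ k - y $ k)" by (simp only: right_diff_distrib)
  then show "dist (?d * x $ k) (?d * y $ k) = dist (x $ k) (y $ k)"
    unfolding dist_real_def using \<open>\<bar>?d\<bar> = 1\<close> by (simp only: abs_mult) simp
qed simp

lemma Rmat_dist: "dist (Rmat i *v x) (Rmat i *v y) = dist x y"
proof -
  have "dist (diag3 1 (-1) (-1) *v x) (diag3 1 (-1) (-1) *v y) = dist x y" by (rule diag_dist) auto
  moreover have "dist (diag3 (-1) 1 (-1) *v x) (diag3 (-1) 1 (-1) *v y) = dist x y" by (rule diag_dist) auto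
  moreover have "dist (diag3 (-1) (-1) 1 *v x) (diag3 (-1) (-1) 1 *v y) = dist x y" by (rule diag_dist) auto
  ultimately show ?thesis unfolding Rmat_def by simp
qed

lemma per_nat: "periodic_on_R L G \<Longrightarrow> G (x + real n * L) = G x"
proof (induction n arbitrary: x)
  case (Suc n)
  have "G (x + real (Suc n) * L) = G ((x + real n * L) + L)" by (simp add: algebra_simps)
  also have "\<dots> = G (x + real n * L)" using Suc.prems by (simp add: periodic_on_R_def)
  finally show ?case using Suc by simp
qed simp

lemma per_int: "periodic_on_R L G \<Longrightarrow> G (x + of_int k * L) = G x"
proof (cases "k \<ge> 0")
  case True
  assume p: "periodic_on_R L G"
  obtain n where "k = int n" using True by (intro that[of "nat k"]) simp
  then show ?thesis using per_nat[OF p] by simp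
next
  case False
  assume p: "periodic_on_R L G"
  obtain n where n: "k = - int n" using False by (intro that[of "nat (-k)"]) simp
  have "G (x + of_int k * L) = G ((x + of_int k * L) + real n * L)" using per_nat[OF p] by simp
  also have "\<dots> = G x" using n by simp
  finally show ?thesis .
qed

lemma plen_map_S: "\<forall>t\<in>set xs. G (S t) = g t \<Longrightarrow> plen G (map S xs) = plen g xs"
  by (induction g xs rule: plen.induct) auto

lemma plen_lip: "sorted xs \<Longrightarrow> xs \<noteq> [] \<Longrightarrow> (\<forall>u\<in>set xs. \<forall>v\<in>set xs. u \<le> v \<longrightarrow> dist (G u) (G v) \<le> v - u)
   \<Longrightarrow> plen G xs \<le> last xs - hd xs"
proof (induction G xs rule: plen.induct)
  case (1 G x y xs)
  have "plen G (y#xs) \<le> last (y#xs) - y" using 1 by auto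
  moreover have "dist (G x) (G y) \<le> y - x" using 1(2,4) by auto
  ultimately show ?case by simp
qed auto



lemma ereal_split_fin:
  fixes x y :: ereal
  assumes "0 \<le> x" "0 \<le> y" "x + y = ereal c"
  shows "x = ereal (real_of_ereal x)"
  using assms by (cases x; cases y) auto

theorem lemma3p12:
  fixes l :: real and g G :: "real \<Rightarrow> real^3"
  assumes "l > 0" and "g \<in> Sigma_sym l"
    and "is_arclength_param l g G"
  shows "G \<in> Sigma_sym (real_of_ereal (curve_length l g))"
proof -
  have lpos: "l > 0" by fact
  have cont: "continuous_on UNIV g" and per: "periodic_on_R l g"
    and pos: "0 < curve_length l g" and fin: "curve_length l g < \<infinity>"
    and sym: "\<forall>i\<in>{0,1,2,3}. tau l i g = g"
    using assms(2) by (auto simp: Sigma_sym_def)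
  define L where "L = real_of_ereal (curve_length l g)"
  have VL: "curve_variation g 0 l = ereal L"
    using pos fin unfolding L_def curve_length_def by (cases "curve_variation g 0 l") auto
  have Lpos: "L > 0" using pos VL by (simp add: curve_length_def)
  have Gper: "periodic_on_R L G" and GS0: "\<forall>t\<in>{0..l}. G (real_of_ereal (curve_variation g 0 t)) = g t"
    using assms(3) unfolding is_arclength_param_def L_def by auto
  define vr where "vr a b = real_of_ereal (curve_variation g a b)" for a b
  define S where "S t = vr 0 t" for t
  have GS: "G (S t) = g t" if "0 \<le> t" "t \<le> l" for t
    using GS0 that by (auto simp: S_def vr_def)
  have gcont: "isCont g x" for x
    using cont by (simp add: continuous_on_eq_continuous_at)
  have Vfin: "curve_variation g a b = ereal (vr a b)" if "0 \<le> a" "a \<le> b" "b \<le> l" for a b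
  proof -
    have "curve_variation g 0 l = curve_variation g 0 a + curve_variation g a l"
      using that by (intro V_add) auto
    also have "curve_variation g a l = curve_variation g a b + curve_variation g b l"
      using that by (intro V_add) auto
    finally have "curve_variation g a b + (curve_variation g 0 a + curve_variation g b l) = ereal L"
      using VL by (simp add: ac_simps)
    moreover have "0 \<le> curve_variation g 0 a + curve_variation g b l"
      using V_nonneg[of 0 a g] V_nonneg[of b l g] that by simp
    ultimately show ?thesis unfolding vr_def
      using ereal_split_fin V_nonneg[of a b g] that by blast
  qed
  have vr_add: "vr a c = vr a b + vr b c" if "0 \<le> a" "a \<le> b" "b \<le> c" "c \<le> l" for a b c
    using V_add[of a b c g] Vfin[of a c] Vfin[of a b] Vfin[of b c] that by simp
  have vr_nonneg: "0 \<le> vr a b" if "0 \<le> a" "a \<le> b" "b \<le> l" for a b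
    using V_nonneg[of a b g] Vfin[OF that] that by simp
  have vr_dist: "dist (g a) (g b) \<le> vr a b" if "0 \<le> a" "a \<le> b" "b \<le> l" for a b
    using V_dist[of a b g] Vfin[OF that] that by simp
  have vr0: "vr a a = 0" if "0 \<le> a" "a \<le> l" for a
    using vr_add[of a a a] that by simp
  have S0: "S 0 = 0" using vr0 lpos by (simp add: S_def)
  have Sl: "S l = L" using VL by (simp add: S_def vr_def)
  have Smono: "S a \<le> S b" if "0 \<le> a" "a \<le> b" "b \<le> l" for a b
    using vr_add[of 0 a b] vr_nonneg[of a b] that by (simp add: S_def)
  have Scont: "continuous_on {0..l} S"
    unfolding continuous_on_iff
  proof (intro ballI allI impI)
    fix t e :: real assume t: "t \<in> {0..l}" and e: "0 < e"
    obtain d1 where d1: "d1 > 0" "\<forall>t'. t \<le> t' \<and> t' \<le> l \<and> t' < t + d1 \<longrightarrow> vr t t' < e"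
    proof (cases "t < l")
      case True
      have "curve_variation g t l < \<infinity>" using Vfin[of t l] t by simp
      from V_right[OF gcont True this e] obtain y where y: "t < y" "y \<le> l" "curve_variation g t y < ereal e"
        by blast
      have "vr t y < e" using y Vfin[of t y] t by simp
      moreover have "vr t t' \<le> vr t y" if "t \<le> t'" "t' \<le> y" for t'
        using vr_add[of t t' y] vr_nonneg[of t' y] that t y by simp
      ultimately show ?thesis using y by (intro that[of "y - t"]) (auto, meson le_less_trans less_imp_le)
    next
      case False
      then show ?thesis using t e vr0 by (intro that[of 1]) auto
    qed
    obtain d2 where d2: "d2 > 0" "\<forall>t'. 0 \<le> t' \<and> t' \<le> t \<and> t - d2 < t' \<longrightarrow> vr t' t < e"
    proof (cases "0 < t")
      case True
      have "curve_variation g 0 t < \<infinity>" using Vfin[of 0 t] t by simp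
      from V_left[OF gcont True this e] obtain y where y: "0 \<le> y" "y < t" "curve_variation g y t < ereal e"
        by blast
      have "vr y t < e" using y Vfin[of y t] t by simp
      moreover have "vr t' t \<le> vr y t" if "y \<le> t'" "t' \<le> t" for t'
        using vr_add[of y t' t] vr_nonneg[of y t'] that t y by simp
      ultimately show ?thesis using y by (intro that[of "t - y"]) (auto, meson le_less_trans less_imp_le)
    next
      case False
      then show ?thesis using t e vr0 by (intro that[of 1]) auto
    qed
    show "\<exists>d>0. \<forall>t'\<in>{0..l}. dist t' t < d \<longrightarrow> dist (S t') (S t) < e"
    proof (intro exI[of _ "min d1 d2"] conjI ballI impI)
      show "0 < min d1 d2" using d1 d2 by simp
      fix t' assume t': "t' \<in> {0..l}" "dist t' t < min d1 d2"
      show "dist (S t') (S t) < e"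
      proof (cases "t \<le> t'")
        case True
        then have "S t' = S t + vr t t'" using vr_add[of 0 t t'] t t' by (simp add: S_def)
        moreover have "vr t t' < e" using d1 t t' True by (auto simp: dist_real_def)
        ultimately show ?thesis using vr_nonneg[of t t'] True t t' by (simp add: dist_real_def)
      next
        case False
        then have "S t = S t' + vr t' t" using vr_add[of 0 t' t] t t' by (simp add: S_def)
        moreover have "vr t' t < e" using d2 t t' False by (auto simp: dist_real_def)
        ultimately show ?thesis using vr_nonneg[of t' t] False t t' by (simp add: dist_real_def)
      qed
    qed
  qed
  have Ssurj: "\<exists>t. 0 \<le> t \<and> t \<le> l \<and> S t = s" if "0 \<le> s" "s \<le> L" for s
    using IVT'[of S 0 s l, OF _ _ _ Scont] S0 Sl that lpos by auto
  have Glip: "dist (G u) (G v) \<le> v - u" if uv: "0 \<le> u" "u \<le> v" "v \<le> L" for u v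
  proof -
    obtain t1 where t1: "0 \<le> t1" "t1 \<le> l" "S t1 = u" using Ssurj[of u] uv by auto
    obtain t2 where t2: "0 \<le> t2" "t2 \<le> l" "S t2 = v" using Ssurj[of v] uv by auto
    show ?thesis
    proof (cases "u = v")
      case False
      then have "t1 < t2" using Smono[of t2 t1] t1 t2 uv by (cases "t1 < t2") auto
      then have "dist (g t1) (g t2) \<le> vr t1 t2" using vr_dist t1 t2 by simp
      moreover have "S t2 = S t1 + vr t1 t2" using vr_add[of 0 t1 t2] t1 t2 \<open>t1 < t2\<close> by (simp add: S_def)
      moreover have "G u = g t1" "G v = g t2" using GS t1 t2 by (metis)+
      ultimately show ?thesis using t1 t2 by simp
    qed simp
  qed
  have GmL: "G (x - L) = G x" for x
    using Gper unfolding periodic_on_R_def by (metis diff_add_cancel)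
  have GL0: "G L = G 0" using Gper unfolding periodic_on_R_def by (metis add_0)
  have Glip2: "dist (G u) (G v) \<le> \<bar>u - v\<bar>" if "-L \<le> u" "u \<le> L" "-L \<le> v" "v \<le> L" for u v
  proof -
    have A: "dist (G u) (G v) \<le> v - u" if "-L \<le> u" "u \<le> v" "v \<le> L" for u v
    proof (cases "0 \<le> u")
      case True
      then show ?thesis using Glip[of u v] that by simp
    next
      case False
      note u = False
      show ?thesis
      proof (cases "v \<le> 0")
        case True
        have "dist (G (u + L)) (G (v + L)) \<le> (v + L) - (u + L)" using Glip[of "u + L" "v + L"] that True u by simp
        then show ?thesis using GmL[of "u + L"] GmL[of "v + L"] by simp
      next
        case False
        have "dist (G (u + L)) (G L) \<le> L - (u + L)" using Glip[of "u + L" L] that u by simp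
        then have 1: "dist (G u) (G 0) \<le> - u" using GmL[of "u + L"] GL0 by simp
        have 2: "dist (G 0) (G v) \<le> v" using Glip[of 0 v] that False Lpos by simp
        show ?thesis using dist_triangle[of "G u" "G v" "G 0"] 1 2 by (simp add: dist_commute)
      qed
    qed
    show ?thesis
    proof (cases "u \<le> v")
      case True
      then show ?thesis using A[of u v] that by simp
    next
      case False
      then show ?thesis using A[of v u] that by (simp add: dist_commute)
    qed
  qed
  have Gcon_loc: "continuous_on {-L..L} G"
    unfolding continuous_on_iff
  proof (intro ballI allI impI)
    fix x e :: real assume x: "x \<in> {-L..L}" and e: "0 < e"
    show "\<exists>d>0. \<forall>x'\<in>{-L..L}. dist x' x < d \<longrightarrow> dist (G x') (G x) < e"
      using Glip2 x e by (intro exI[of _ e]) (force simp: dist_real_def)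
  qed
  have Gcont: "continuous_on UNIV G"
  proof (intro continuous_at_imp_continuous_on ballI)
    fix x :: real
    define k where "k = floor (x / L)"
    define x0 where "x0 = x - of_int k * L"
    have "of_int k \<le> x / L" "x / L < of_int k + 1" unfolding k_def by linarith+
    then have "of_int k * L \<le> x" "x < (of_int k + 1) * L" using Lpos by (simp_all add: field_simps)
    then have x0: "0 \<le> x0" "x0 < L" unfolding x0_def by (simp_all add: algebra_simps)
    have "isCont G x0"
      using continuous_on_interior[OF Gcon_loc, of x0] x0 Lpos by simp
    moreover have "(\<lambda>y. G (y - of_int k * L)) = G"
    proof
      fix y show "G (y - of_int k * L) = G y" using per_int[OF Gper, of "y - of_int k * L" k] by simp
    qed
    ultimately have "isCont (\<lambda>y. G (y - of_int k * L)) x"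
      using isCont_o2[where f="\<lambda>y. y - of_int k * L" and a=x and g=G] unfolding x0_def by simp
    then show "isCont G x" using \<open>(\<lambda>y. G (y - of_int k * L)) = G\<close> by simp
  qed
  have lenG_le: "curve_length L G \<le> ereal L"
    unfolding curve_length_def cv_alt
  proof (rule SUP_least)
    fix xs assume xs: "xs \<in> parts 0 L"
    have "plen G xs \<le> last xs - hd xs"
    proof (rule plen_lip)
      show "sorted xs" "xs \<noteq> []" using xs by (auto simp: parts_def)
      show "\<forall>u\<in>set xs. \<forall>v\<in>set xs. u \<le> v \<longrightarrow> dist (G u) (G v) \<le> v - u"
        using Glip parts_bounds[OF xs] by blast
    qed
    then show "ereal (plen G xs) \<le> ereal L" using xs by (simp add: parts_def)
  qed
  have lenG_pos: "0 < curve_length L G"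
  proof -
    have "0 < (SUP xs\<in>parts 0 l. ereal (plen g xs))" using pos by (simp add: curve_length_def cv_alt)
    then obtain P where P: "P \<in> parts 0 l" "0 < plen g P" by (auto simp: less_SUP_iff)
    have Pb: "\<forall>u\<in>set P. 0 \<le> u \<and> u \<le> l" using parts_bounds[OF P(1)] by blast
    have "map S P \<in> parts 0 L"
    proof -
      have "sorted P" "P \<noteq> []" "hd P = 0" "last P = l" using P(1) by (auto simp: parts_def)
      moreover have "sorted (map S P)"
        unfolding sorted_wrt_map
        using \<open>sorted P\<close> by (rule sorted_wrt_mono_rel[rotated]) (use Smono Pb in auto)
      ultimately show ?thesis using S0 Sl by (simp add: parts_def hd_map last_map)
    qed
    moreover have "plen G (map S P) = plen g P" using plen_map_S GS Pb by blast
    ultimately have "ereal (plen g P) \<le> curve_variation G 0 L" using V_upper by metis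
    moreover have "0 < ereal (plen g P)" using P(2) by simp
    ultimately show ?thesis unfolding curve_length_def by (rule order.strict_trans2[rotated])
  qed
  have gt: "Rmat i *v g (psi l i t) = g t" if "i \<in> {0,1,2,3}" for i t
    using sym that unfolding tau_def by (metis)
  have gper: "g (x + l) = g x" for x using per by (simp add: periodic_on_R_def)
  have d2: "\<forall>u v. dist (g (u + l/2)) (g (v + l/2)) = dist (g u) (g v)"
  proof (intro allI)
    fix u v
    have "g (u + l/2) = Rmat 2 *v g u" "g (v + l/2) = Rmat 2 *v g v"
      using gt[of 2 "u + l/2"] gt[of 2 "v + l/2"] by (simp_all add: psi_def)
    then show "dist (g (u + l/2)) (g (v + l/2)) = dist (g u) (g v)" by (simp add: Rmat_dist)
  qed
  have r1: "g (l/2 - u) = Rmat 1 *v g u" for u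
    using gt[of 1 "l/2 - u"] by (simp add: psi_def)
  have d1: "\<forall>u v. dist (g (l/2 - u)) (g (l/2 - v)) = dist (g u) (g v)"
    by (simp add: r1 Rmat_dist)
  have d1': "\<forall>u v. dist (g (3*l/2 - u)) (g (3*l/2 - v)) = dist (g u) (g v)"
  proof (intro allI)
    fix u v
    have "g (3*l/2 - u) = g (l/2 - u)" "g (3*l/2 - v) = g (l/2 - v)"
      using gper[of "l/2 - u"] gper[of "l/2 - v"] by (simp_all add: algebra_simps)
    then show "dist (g (3*l/2 - u)) (g (3*l/2 - v)) = dist (g u) (g v)" using d1 by simp
  qed
  have d3: "\<forall>u v. dist (g (l - u)) (g (l - v)) = dist (g u) (g v)"
  proof -
    have "g (l - u) = Rmat 3 *v g u" for u
      using gt[of 3 "l - u"] by (simp add: psi_def)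
    then show ?thesis by (simp add: Rmat_dist)
  qed
  have half: "vr 0 (l/2) = L/2"
  proof -
    have "curve_variation g (0 + l/2) (l/2 + l/2) = curve_variation g 0 (l/2)"
      by (rule V_trans[OF d2])
    then have "vr (l/2) l = vr 0 (l/2)" by (simp add: vr_def)
    moreover have "vr 0 l = vr 0 (l/2) + vr (l/2) l" using vr_add[of 0 "l/2" l] lpos by simp
    moreover have "vr 0 l = L" using Sl by (simp add: S_def)
    ultimately show ?thesis by linarith
  qed
  have key: "G (psi L i (S t)) = g (psi l i t)" if kt: "i \<in> {0,1,2,3}" "0 \<le> t" "t \<le> l" for i t
  proof -
    consider "i = 0" | "i = 1" | "i = 2" | "i = 3" using kt by auto
    then show ?thesis
    proof cases
      case 1
      then show ?thesis using GS kt by (simp add: psi_def)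
    next
      case 2
      show ?thesis
      proof (cases "t \<le> l/2")
        case True
        have "curve_variation g (l/2 - l/2) (l/2 - t) = curve_variation g t (l/2)"
          by (rule V_refl[OF d1])
        then have "vr 0 (l/2 - t) = vr t (l/2)" by (simp add: vr_def)
        moreover have "vr 0 (l/2) = vr 0 t + vr t (l/2)" using vr_add[of 0 t "l/2"] kt True by simp
        ultimately have "S (l/2 - t) = - S t + L/2" using half unfolding S_def by linarith
        then show ?thesis using GS[of "l/2 - t"] kt True 2 by (simp add: psi_def)
      next
        case False
        have "curve_variation g (3*l/2 - t) (3*l/2 - l/2) = curve_variation g (l/2) t"
          by (rule V_refl[OF d1'])
        then have "vr (3*l/2 - t) l = vr (l/2) t" by (simp add: vr_def)
        moreover have "vr 0 l = vr 0 (3*l/2 - t) + vr (3*l/2 - t) l"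
          using vr_add[of 0 "3*l/2 - t" l] kt False by simp
        moreover have "vr 0 t = vr 0 (l/2) + vr (l/2) t" using vr_add[of 0 "l/2" t] kt False by simp
        moreover have "vr 0 l = L" using Sl by (simp add: S_def)
        ultimately have e: "S (3*l/2 - t) - L = - S t + L/2" using half unfolding S_def by linarith
        have "G (- S t + L/2) = G (S (3*l/2 - t))" using GmL[of "S (3*l/2 - t)"] e by simp
        also have "\<dots> = g (3*l/2 - t)" using GS[of "3*l/2 - t"] kt False by simp
        also have "\<dots> = g (- t + l/2)" using gper[of "- t + l/2"] by (simp add: algebra_simps)
        finally show ?thesis using 2 by (simp add: psi_def)
      qed
    next
      case 3
      show ?thesis
      proof (cases "l/2 \<le> t")
        case True
        have "curve_variation g (0 + l/2) ((t - l/2) + l/2) = curve_variation g 0 (t - l/2)"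
          by (rule V_trans[OF d2])
        then have "vr (l/2) t = vr 0 (t - l/2)" by (simp add: vr_def)
        moreover have "vr 0 t = vr 0 (l/2) + vr (l/2) t" using vr_add[of 0 "l/2" t] kt True by simp
        ultimately have "S (t - l/2) = S t - L/2" using half unfolding S_def by linarith
        then show ?thesis using GS[of "t - l/2"] kt True 3 by (simp add: psi_def)
      next
        case False
        have "curve_variation g (0 + l/2) (t + l/2) = curve_variation g 0 t"
          by (rule V_trans[OF d2])
        then have "vr (l/2) (t + l/2) = vr 0 t" by (simp add: vr_def)
        moreover have "vr 0 (t + l/2) = vr 0 (l/2) + vr (l/2) (t + l/2)"
          using vr_add[of 0 "l/2" "t + l/2"] kt False by simp
        ultimately have e: "S (t + l/2) - L = S t - L/2" using half unfolding S_def by linarith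
        have "G (S t - L/2) = G (S (t + l/2))" using GmL[of "S (t + l/2)"] e by simp
        also have "\<dots> = g (t + l/2)" using GS[of "t + l/2"] kt False by simp
        also have "\<dots> = g (t - l/2)" using gper[of "t - l/2"] by (simp add: algebra_simps)
        finally show ?thesis using 3 by (simp add: psi_def)
      qed
    next
      case 4
      have "curve_variation g (l - l) (l - t) = curve_variation g t l"
        by (rule V_refl[OF d3])
      then have "vr 0 (l - t) = vr t l" by (simp add: vr_def)
      moreover have "vr 0 l = vr 0 t + vr t l" using vr_add[of 0 t l] kt by simp
      moreover have "vr 0 l = L" using Sl by (simp add: S_def)
      ultimately have "S (l - t) = - S t + L" unfolding S_def by linarith
      then show ?thesis using GS[of "l - t"] kt 4 by (simp add: psi_def)
    qed
  qed
  have symloc: "Rmat i *v G (psi L i s) = G s" if st: "i \<in> {0,1,2,3}" "0 \<le> s" "s \<le> L" for i s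
  proof -
    obtain t where t: "0 \<le> t" "t \<le> l" "S t = s" using Ssurj st by blast
    have "Rmat i *v G (psi L i s) = Rmat i *v g (psi l i t)" using key[of i t] st t by simp
    also have "\<dots> = g t" using gt st by simp
    also have "\<dots> = G s" using GS[of t] t by simp
    finally show ?thesis .
  qed
  have symG: "tau L i G = G" if iI: "i \<in> {0,1,2,3}" for i
  proof
    fix s
    define k where "k = floor (s / L)"
    define s0 where "s0 = s - of_int k * L"
    have "of_int k \<le> s / L" "s / L < of_int k + 1" unfolding k_def by linarith+
    then have "of_int k * L \<le> s" "s < (of_int k + 1) * L" using Lpos by (simp_all add: field_simps)
    then have s0: "0 \<le> s0" "s0 \<le> L" unfolding s0_def by (simp_all add: algebra_simps)
    obtain j :: int where j: "psi L i s = psi L i s0 + of_int j * L"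
    proof (cases "i = 0 \<or> i = 2")
      case True
      then show ?thesis using that[of k] by (auto simp: psi_def s0_def)
    next
      case False
      then show ?thesis using that[of "-k"] by (auto simp: psi_def s0_def)
    qed
    have "tau L i G s = Rmat i *v G (psi L i s0)"
      unfolding tau_def j using per_int[OF Gper] by simp
    also have "\<dots> = G s0" using symloc iI s0 by simp
    also have "\<dots> = G s" using per_int[OF Gper, of s0 k] by (simp add: s0_def)
    finally show "tau L i G s = G s" .
  qed
  show ?thesis
    unfolding Sigma_sym_def L_def[symmetric]
    using Gcont Gper lenG_pos lenG_le symG by auto
qed

end
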